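(* For every integer $n\ge 2$, $C^0_{L_n}=1+2\cos\big(\frac{\pi}{n+1}\big)$.
   Context: $L_n$ is the path graph with vertices $\{1,\dots,n\}$ and edges $\{j,j+1\}$, $1\le j\le n-1$, with the graph distance. A measure $\mu$ on $L_n$ is a weight function $\mu:\{1,\dots,n\}\to(0,\infty)$, $\mu(A)=\sum_{v\in A}\mu(v)$. Closed balls: $B(x,r)=\{y:|x-y|\le r\}$. $C^0_\mu=\max_{1\le x\le n}\mu(B(x,1))/\mu(x)$ and $C^0_{L_n}=\inf_\mu C^0_\mu$ over all such measures. *)

theory Defs
  imports "HOL-Analysis.Analysis"
begin

text \<open>The path graph L_n has vertex set {1..n}; graph distance is |x - y|.\<close>

definition path_dist :: "nat \<Rightarrow> nat \<Rightarrow> nat" where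
  "path_dist x y = (if x \<le> y then y - x else x - y)"

definition path_ball :: "nat \<Rightarrow> nat \<Rightarrow> nat \<Rightarrow> nat set" where
  "path_ball n x r = {y \<in> {1..n}. path_dist x y \<le> r}"

definition is_path_measure :: "nat \<Rightarrow> (nat \<Rightarrow> real) \<Rightarrow> bool" where
  "is_path_measure n \<mu> \<longleftrightarrow> (\<forall>v\<in>{1..n}. 0 < \<mu> v)"

definition meas :: "(nat \<Rightarrow> real) \<Rightarrow> nat set \<Rightarrow> real" where
  "meas \<mu> A = (\<Sum>v\<in>A. \<mu> v)"

definition C0_mu :: "nat \<Rightarrow> (nat \<Rightarrow> real) \<Rightarrow> real" where
  "C0_mu n \<mu> = Max ((\<lambda>x. meas \<mu> (path_ball n x 1) / \<mu> x) ` {1..n})"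

definition C0_L :: "nat \<Rightarrow> real" where
  "C0_L n = Inf (C0_mu n ` {\<mu>. is_path_measure n \<mu>})"

end

theory Submission
  imports Defs
begin

lemma pd_sym: "path_dist x y = path_dist y x"
  unfolding path_dist_def by auto

lemma swap_meas:
  "(\<Sum>x\<in>{1..n}. f x * meas g (path_ball n x 1)) = (\<Sum>y\<in>{1..n}. g y * meas f (path_ball n y 1))"
proof -
  have "(\<Sum>x\<in>{1..n}. f x * meas g (path_ball n x 1))
      = (\<Sum>x\<in>{1..n}. \<Sum>y\<in>{y. y \<in> {1..n} \<and> path_dist x y \<le> 1}. f x * g y)"
    unfolding meas_def path_ball_def by (simp add: sum_distrib_left)
  also have "\<dots> = (\<Sum>y\<in>{1..n}. \<Sum>x\<in>{x. x \<in> {1..n} \<and> path_dist x y \<le> 1}. f x * g y)"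
    by (rule sum.swap_restrict) auto
  also have "\<dots> = (\<Sum>y\<in>{1..n}. g y * meas f (path_ball n y 1))"
    unfolding meas_def path_ball_def
    by (simp add: sum_distrib_left pd_sym mult.commute)
  finally show ?thesis .
qed

lemma ball_sum:
  assumes "f 0 = 0" "f (n+1) = 0" "1 \<le> x" "x \<le> n"
  shows "meas f (path_ball n x 1) = f (x-1) + f x + f (x+1)"
proof -
  have B: "path_ball n x 1 = {x-1, x, x+1} \<inter> {1..n}"
    unfolding path_ball_def path_dist_def by auto
  have "sum f ({x-1, x, x+1} \<inter> {1..n}) = sum f {x-1, x, x+1}"
  proof (rule sum.mono_neutral_left)
    show "\<forall>i\<in>{x - 1, x, x + 1} - {x - 1, x, x + 1} \<inter> {1..n}. f i = 0"
    proof
      fix i assume "i \<in> {x - 1, x, x + 1} - {x - 1, x, x + 1} \<inter> {1..n}"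
      then have "i = 0 \<or> i = n+1" using assms(3,4) by auto
      then show "f i = 0" using assms(1,2) by auto
    qed
  qed auto
  also have "\<dots> = f (x-1) + f x + f (x+1)"
  proof -
    obtain m where "x = Suc m" using assms(3) by (cases x) auto
    then show ?thesis by simp
  qed
  finally show ?thesis unfolding meas_def B .
qed

lemma eigen_id:
  assumes "1 \<le> x"
  shows "sin (real (x-1) * a) + sin (real x * a) + sin (real (x+1) * a) = (1 + 2 * cos a) * sin (real x * a)"
proof -
  have "real (x-1) * a = real x * a - a" using assms by (simp add: of_nat_diff algebra_simps)
  moreover have "real (x+1) * a = real x * a + a" by (simp add: algebra_simps)
  moreover have "sin (t - a) + sin t + sin (t + a) = (1 + 2 * cos a) * sin t" for t
    by (simp add: sin_add sin_diff algebra_simps)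
  ultimately show ?thesis by metis
qed

theorem theorem3p7:
  fixes n :: nat
  assumes "n \<ge> 2"
  shows "C0_L n = 1 + 2 * cos (pi / real (n + 1))"
proof -
  define a where "a = pi / real (n + 1)"
  define lam where "lam = 1 + 2 * cos a"
  define v where "v = (\<lambda>k::nat. sin (real k * a))"
  have vpos: "0 < v k" if "k \<in> {1..n}" for k
  proof -
    have "0 < real k * a" using that by (auto simp: a_def)
    moreover have "real k * a < pi"
    proof -
      have "real k < real (n+1)" using that by auto
      then have "real k * (pi / real (n+1)) < real (n+1) * (pi / real (n+1))"
        by (intro mult_strict_right_mono) auto
      then show ?thesis by (simp add: a_def)
    qed
    ultimately show ?thesis unfolding v_def by (rule sin_gt_zero)
  qed
  have v0: "v 0 = 0" by (simp add: v_def)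
  have vn: "v (n+1) = 0" by (simp add: v_def a_def)
  have eig: "meas v (path_ball n x 1) = lam * v x" if "x \<in> {1..n}" for x
    using ball_sum[OF v0 vn, of x] that eigen_id[of x a] by (simp add: v_def lam_def)
  have fin: "finite ((\<lambda>x. meas \<mu> (path_ball n x 1) / \<mu> x) ` {1..n})" for \<mu>
    by simp
  have ne: "(\<lambda>x. meas \<mu> (path_ball n x 1) / \<mu> x) ` {1..n} \<noteq> {}" for \<mu>
    using assms by auto
  have vmeas: "is_path_measure n v" using vpos by (simp add: is_path_measure_def)
  have Cv: "C0_mu n v = lam"
  proof -
    have "(\<lambda>x. meas v (path_ball n x 1) / v x) ` {1..n} = {lam}"
    proof -
      have "(\<lambda>x. meas v (path_ball n x 1) / v x) ` {1..n} = (\<lambda>x. lam) ` {1..n}"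
      proof (rule image_cong)
        fix x assume x: "x \<in> {1..n}"
        show "meas v (path_ball n x 1) / v x = lam"
          using eig[OF x] vpos[OF x] by simp
      qed simp
      moreover have "(1::nat) \<in> {1..n}" using assms by simp
      then have "(\<lambda>x. lam) ` {1..n} = {lam}" by blast
      ultimately show ?thesis by simp
    qed
    then show ?thesis by (simp add: C0_mu_def)
  qed
  have lower: "lam \<le> C0_mu n \<mu>" if "is_path_measure n \<mu>" for \<mu>
  proof -
    define C where "C = C0_mu n \<mu>"
    have mpos: "0 < \<mu> x" if "x \<in> {1..n}" for x
      using \<open>is_path_measure n \<mu>\<close> that by (simp add: is_path_measure_def)
    have le: "meas \<mu> (path_ball n x 1) \<le> C * \<mu> x" if "x \<in> {1..n}" for x
    proof -
      have "meas \<mu> (path_ball n x 1) / \<mu> x \<le> C"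
        unfolding C_def C0_mu_def using that by (intro Max_ge) auto
      then show ?thesis using mpos[OF that] by (simp add: divide_le_eq)
    qed
    have "lam * (\<Sum>y\<in>{1..n}. \<mu> y * v y) = (\<Sum>y\<in>{1..n}. \<mu> y * meas v (path_ball n y 1))"
      unfolding sum_distrib_left by (intro sum.cong refl) (use eig in auto)
    also have "\<dots> = (\<Sum>x\<in>{1..n}. v x * meas \<mu> (path_ball n x 1))"
      by (rule swap_meas[symmetric])
    also have "\<dots> \<le> (\<Sum>x\<in>{1..n}. v x * (C * \<mu> x))"
      by (intro sum_mono mult_left_mono le) (use vpos in \<open>auto intro: less_imp_le\<close>)
    also have "\<dots> = C * (\<Sum>y\<in>{1..n}. \<mu> y * v y)"
      by (simp add: sum_distrib_left algebra_simps)
    finally have *: "lam * (\<Sum>y\<in>{1..n}. \<mu> y * v y) \<le> C * (\<Sum>y\<in>{1..n}. \<mu> y * v y)" .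
    have "0 < (\<Sum>y\<in>{1..n}. \<mu> y * v y)"
      using assms by (intro sum_pos) (use mpos vpos in auto)
    with * have "lam \<le> C" by simp
    then show ?thesis by (simp add: C_def)
  qed
  have "C0_L n = lam"
    unfolding C0_L_def
  proof (rule cInf_eq_minimum)
    show "lam \<in> C0_mu n ` {\<mu>. is_path_measure n \<mu>}" using Cv vmeas by force
  next
    fix x assume "x \<in> C0_mu n ` {\<mu>. is_path_measure n \<mu>}"
    then show "lam \<le> x" using lower by auto
  qed
  then show ?thesis by (simp add: lam_def a_def)
qed

end
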